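(* Let $(\mathbb{P},\le,f)$ be a forcing property for $\mathcal{L}_A$ and $p\in\mathbb{P}$. Then (1) $F_p(\bigvee\Phi)=\sup_{\phi\in\Phi}F^w_p(\phi)$ for every sentence $\bigvee\Phi$ of $\mathcal{L}_A(C)$; (2) $F_p(\sup_x\phi(x))=\sup_{c\in C}F^w_p(\phi(c))$ for every sentence $\sup_x\phi(x)$ of $\mathcal{L}_A(C)$.
   Context: $\mathcal{L}$ is a countable continuous signature; formulas of $\mathcal{L}_{\omega_1,\omega}$ are built from atomic formulas using $\neg$, $\tfrac12$, $\dotplus$, countable conjunctions $\bigwedge$ and $\inf_x$; $\bigvee\Phi$ abbreviates $\neg\bigwedge_{\phi\in\Phi}\neg\phi$ and $\sup_x\phi$ abbreviates $\neg\inf_x\neg\phi$. $\mathcal{L}_A$ is a countable fragment, $C=\{c_i:i<\omega\}$ new constants, $\mathcal{L}_A(C)$ the smallest countable fragment of $\mathcal{L}_{\omega_1,\omega}(C)$ containing $\mathcal{L}_A$, $\mathcal{L}_A^{as}(C)$ its atomic sentences, $\mathcal{T}(C)$ closed terms. A forcing property $(\mathbb{P},\le,f)$: poset with $f_p\colon\mathcal{L}_A^{as}(C)\to[0,1]$ such that (1) $p\le q\Rightarrow f_p\le f_q$; (2) for every $p$, $\varepsilon>0$, $\tau,\sigma\in\mathcal{T}(C)$, atomic $\varphi(x)$ there are $q\le p$, $c\in C$ with $f_q(d(\tau,c))<\varepsilon$, $f_q(d(\tau,\sigma))<f_p(d(\sigma,\tau))+\varepsilon$, and if $f_p(d(\tau,\sigma))<\delta_{\varphi,x}(\varepsilon)$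 then $f_q(\varphi(\sigma))<f_p(\varphi(\tau))+\varepsilon$. $F_p$: $f_p$ on atomics; $F_p(\neg\varphi)=1-\inf_{q\le p}F_q(\varphi)$; $F_p(\tfrac12\varphi)=\tfrac12F_p(\varphi)$; $F_p(\varphi\dotplus\psi)=\min(F_p(\varphi)+F_p(\psi),1)$; $F_p(\bigwedge\Phi)=\inf_{\varphi\in\Phi}F_p(\varphi)$; $F_p(\inf_x\varphi)=\inf_{c\in C}F_p(\varphi(c))$. $F^w_p(\varphi)=\sup_{q\le p}\inf_{q'\le q}F_{q'}(\varphi)$. *)

theory Defs
  imports Complex_Main "HOL-Library.Countable_Set_Type"
begin

section \<open>Syntax of L_{omega1,omega}(C) for a continuous signature\<close>

text \<open>Function symbols (constants are 0-ary function symbols) have type 'f, relation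
symbols type 'r; arities are given by separate functions.  The new constants
c_i (i < omega) are the terms Cst i.\<close>

datatype 'f trm = Var nat | Fn 'f "'f trm list" | Cst nat

datatype ('f, 'r) fml =
    Rel 'r "'f trm list"
  | Dist "'f trm" "'f trm"
  | Neg "('f, 'r) fml"
  | Half "('f, 'r) fml"
  | Plus "('f, 'r) fml" "('f, 'r) fml"
  | Conj "('f, 'r) fml cset"
  | InfQ nat "('f, 'r) fml"

definition Disj :: "('f, 'r) fml cset \<Rightarrow> ('f, 'r) fml" where
  "Disj \<Phi> = Neg (Conj (cimage Neg \<Phi>))"

definition SupQ :: "nat \<Rightarrow> ('f, 'r) fml \<Rightarrow> ('f, 'r) fml" where
  "SupQ x \<phi> = Neg (InfQ x (Neg \<phi>))"

primrec tvars :: "'f trm \<Rightarrow> nat set" where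
  "tvars (Var x) = {x}"
| "tvars (Fn g ts) = \<Union> (set (map tvars ts))"
| "tvars (Cst i) = {}"

primrec tsubst :: "nat \<Rightarrow> 'f trm \<Rightarrow> 'f trm \<Rightarrow> 'f trm" where
  "tsubst x t (Var y) = (if y = x then t else Var y)"
| "tsubst x t (Fn g ts) = Fn g (map (tsubst x t) ts)"
| "tsubst x t (Cst i) = Cst i"

primrec fv :: "('f, 'r) fml \<Rightarrow> nat set" where
  "fv (Rel r ts) = \<Union> (set (map tvars ts))"
| "fv (Dist s t) = tvars s \<union> tvars t"
| "fv (Neg \<phi>) = fv \<phi>"
| "fv (Half \<phi>) = fv \<phi>"
| "fv (Plus \<phi> \<psi>) = fv \<phi> \<union> fv \<psi>"
| "fv (Conj \<Phi>) = \<Union> (rcset (cimage fv \<Phi>))"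
| "fv (InfQ x \<phi>) = fv \<phi> - {x}"

primrec subst :: "nat \<Rightarrow> 'f trm \<Rightarrow> ('f, 'r) fml \<Rightarrow> ('f, 'r) fml" where
  "subst x t (Rel r ts) = Rel r (map (tsubst x t) ts)"
| "subst x t (Dist s u) = Dist (tsubst x t s) (tsubst x t u)"
| "subst x t (Neg \<phi>) = Neg (subst x t \<phi>)"
| "subst x t (Half \<phi>) = Half (subst x t \<phi>)"
| "subst x t (Plus \<phi> \<psi>) = Plus (subst x t \<phi>) (subst x t \<psi>)"
| "subst x t (Conj \<Phi>) = Conj (cimage (subst x t) \<Phi>)"
| "subst x t (InfQ y \<phi>) = (if y = x then InfQ y \<phi> else InfQ y (subst x t \<phi>))"

primrec freefor :: "'f trm \<Rightarrow> nat \<Rightarrow> ('f, 'r) fml \<Rightarrow> bool" where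
  "freefor t x (Rel r ts) = True"
| "freefor t x (Dist s u) = True"
| "freefor t x (Neg \<phi>) = freefor t x \<phi>"
| "freefor t x (Half \<phi>) = freefor t x \<phi>"
| "freefor t x (Plus \<phi> \<psi>) = (freefor t x \<phi> \<and> freefor t x \<psi>)"
| "freefor t x (Conj \<Phi>) = (\<forall>b \<in> rcset (cimage (freefor t x) \<Phi>). b)"
| "freefor t x (InfQ y \<phi>) =
     (if y = x then True else ((x \<in> fv \<phi> \<longrightarrow> y \<notin> tvars t) \<and> freefor t x \<phi>))"

fun is_atomic :: "('f, 'r) fml \<Rightarrow> bool" where
  "is_atomic (Rel r ts) = True"
| "is_atomic (Dist s t) = True"
| "is_atomic _ = False"

fun immsub :: "('f, 'r) fml \<Rightarrow> ('f, 'r) fml set" where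
  "immsub (Neg \<phi>) = {\<phi>}"
| "immsub (Half \<phi>) = {\<phi>}"
| "immsub (Plus \<phi> \<psi>) = {\<phi>, \<psi>}"
| "immsub (Conj \<Phi>) = rcset \<Phi>"
| "immsub (InfQ x \<phi>) = {\<phi>}"
| "immsub _ = {}"

text \<open>Well-formedness w.r.t. the arities; D is the set of indices i for which
the new constant c_i may occur (D = {} gives L, D = UNIV gives L(C)).\<close>
primrec wf_trm :: "('f \<Rightarrow> nat) \<Rightarrow> nat set \<Rightarrow> 'f trm \<Rightarrow> bool" where
  "wf_trm arf D (Var x) = True"
| "wf_trm arf D (Fn g ts) = (length ts = arf g \<and> (\<forall>b \<in> set (map (wf_trm arf D) ts). b))"
| "wf_trm arf D (Cst i) = (i \<in> D)"

primrec wf_fml :: "('f \<Rightarrow> nat) \<Rightarrow> ('r \<Rightarrow> nat) \<Rightarrow> nat set \<Rightarrow> ('f, 'r) fml \<Rightarrow> bool" where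
  "wf_fml arf arr D (Rel r ts) = (length ts = arr r \<and> (\<forall>t \<in> set ts. wf_trm arf D t))"
| "wf_fml arf arr D (Dist s t) = (wf_trm arf D s \<and> wf_trm arf D t)"
| "wf_fml arf arr D (Neg \<phi>) = wf_fml arf arr D \<phi>"
| "wf_fml arf arr D (Half \<phi>) = wf_fml arf arr D \<phi>"
| "wf_fml arf arr D (Plus \<phi> \<psi>) = (wf_fml arf arr D \<phi> \<and> wf_fml arf arr D \<psi>)"
| "wf_fml arf arr D (Conj \<Phi>) = (\<forall>b \<in> rcset (cimage (wf_fml arf arr D) \<Phi>). b)"
| "wf_fml arf arr D (InfQ x \<phi>) = wf_fml arf arr D \<phi>"

definition fragment :: "('f \<Rightarrow> nat) \<Rightarrow> ('r \<Rightarrow> nat) \<Rightarrow> nat set \<Rightarrow> ('f, 'r) fml set \<Rightarrow> bool" where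
  "fragment arf arr D S \<longleftrightarrow>
     S \<subseteq> {\<phi>. wf_fml arf arr D \<phi>} \<and>
     (\<forall>\<phi>. is_atomic \<phi> \<and> wf_fml arf arr D \<phi> \<longrightarrow> \<phi> \<in> S) \<and>
     (\<forall>\<phi>\<in>S. immsub \<phi> \<subseteq> S) \<and>
     (\<forall>\<phi>\<in>S. Neg \<phi> \<in> S \<and> Half \<phi> \<in> S \<and> (\<forall>x. InfQ x \<phi> \<in> S)) \<and>
     (\<forall>\<phi>\<in>S. \<forall>\<psi>\<in>S. Plus \<phi> \<psi> \<in> S) \<and>
     (\<forall>\<Phi>. finite (rcset \<Phi>) \<and> rcset \<Phi> \<subseteq> S \<longrightarrow> Conj \<Phi> \<in> S) \<and>
     (\<forall>\<phi>\<in>S. \<forall>x t. wf_trm arf D t \<and> freefor t x \<phi> \<longrightarrow> subst x t \<phi> \<in> S)"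

definition LAC :: "('f \<Rightarrow> nat) \<Rightarrow> ('r \<Rightarrow> nat) \<Rightarrow> ('f, 'r) fml set \<Rightarrow> ('f, 'r) fml set" where
  "LAC arf arr LA = \<Inter> {S. fragment arf arr UNIV S \<and> countable S \<and> LA \<subseteq> S}"

definition sentence :: "('f, 'r) fml \<Rightarrow> bool" where
  "sentence \<phi> \<longleftrightarrow> fv \<phi> = {}"

definition atomic_sentences :: "('f \<Rightarrow> nat) \<Rightarrow> ('r \<Rightarrow> nat) \<Rightarrow> ('f, 'r) fml set \<Rightarrow> ('f, 'r) fml set" where
  "atomic_sentences arf arr LA = {\<phi> \<in> LAC arf arr LA. is_atomic \<phi> \<and> sentence \<phi>}"

definition closed_terms :: "('f \<Rightarrow> nat) \<Rightarrow> 'f trm set" where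
  "closed_terms arf = {t. wf_trm arf UNIV t \<and> tvars t = {}}"

text \<open>delta phi x eps is the modulus of uniform continuity delta_{phi,x}(eps) of the
atomic formula phi in the variable x (given with the signature).\<close>
definition forcing_property ::
  "('f \<Rightarrow> nat) \<Rightarrow> ('r \<Rightarrow> nat) \<Rightarrow> ('f, 'r) fml set \<Rightarrow> (('f, 'r) fml \<Rightarrow> nat \<Rightarrow> real \<Rightarrow> real)
   \<Rightarrow> 'p set \<Rightarrow> ('p \<Rightarrow> 'p \<Rightarrow> bool) \<Rightarrow> ('p \<Rightarrow> ('f, 'r) fml \<Rightarrow> real) \<Rightarrow> bool" where
  "forcing_property arf arr LA \<delta> P le f \<longleftrightarrow>
     (\<forall>p\<in>P. le p p) \<and>
     (\<forall>p\<in>P. \<forall>q\<in>P. le p q \<and> le q p \<longrightarrow> p = q) \<and>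
     (\<forall>p\<in>P. \<forall>q\<in>P. \<forall>r\<in>P. le p q \<and> le q r \<longrightarrow> le p r) \<and>
     (\<forall>p\<in>P. \<forall>\<phi>\<in>atomic_sentences arf arr LA. 0 \<le> f p \<phi> \<and> f p \<phi> \<le> 1) \<and>
     (\<forall>p\<in>P. \<forall>q\<in>P. le p q \<longrightarrow> (\<forall>\<phi>\<in>atomic_sentences arf arr LA. f p \<phi> \<le> f q \<phi>)) \<and>
     (\<forall>p\<in>P. \<forall>\<epsilon>>0. \<forall>\<tau>\<in>closed_terms arf. \<forall>\<sigma>\<in>closed_terms arf. \<forall>\<phi> x.
        is_atomic \<phi> \<and> \<phi> \<in> LAC arf arr LA \<and> fv \<phi> \<subseteq> {x} \<longrightarrow>
        (\<exists>q\<in>P. \<exists>c. le q p \<and>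
            f q (Dist \<tau> (Cst c)) < \<epsilon> \<and>
            f q (Dist \<tau> \<sigma>) < f p (Dist \<sigma> \<tau>) + \<epsilon> \<and>
            (f p (Dist \<tau> \<sigma>) < \<delta> \<phi> x \<epsilon> \<longrightarrow>
               f q (subst x \<sigma> \<phi>) < f p (subst x \<tau> \<phi>) + \<epsilon>)))"

text \<open>Infima / suprema of subsets of [0,1], taken in [0,1].\<close>
definition inf01 :: "real set \<Rightarrow> real" where
  "inf01 S = (if S = {} then 1 else Inf S)"

definition sup01 :: "real set \<Rightarrow> real" where
  "sup01 S = (if S = {} then 0 else Sup S)"

text \<open>Skeleton of a formula (all terms and bound variable names erased), used only to
justify termination of the recursion defining F.\<close>
primrec skel :: "('f, 'r) fml \<Rightarrow> ('f, 'r) fml" where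
  "skel (Rel r ts) = Rel r []"
| "skel (Dist s t) = Dist (Var 0) (Var 0)"
| "skel (Neg \<phi>) = Neg (skel \<phi>)"
| "skel (Half \<phi>) = Half (skel \<phi>)"
| "skel (Plus \<phi> \<psi>) = Plus (skel \<phi>) (skel \<psi>)"
| "skel (Conj \<Phi>) = Conj (cimage skel \<Phi>)"
| "skel (InfQ x \<phi>) = InfQ 0 (skel \<phi>)"

lemma skel_subst[simp]: "skel (subst x t \<phi>) = skel \<phi>"
  by (induction \<phi>) (auto simp: cset.map_comp intro!: cset.map_cong0)

lemma wf_immsub: "wf {(a, b). a \<in> immsub b}"
proof (rule wfUNIVI)
  fix P :: "('f, 'r) fml \<Rightarrow> bool" and x
  assume H: "\<forall>x. (\<forall>y. (y, x) \<in> {(a, b). a \<in> immsub b} \<longrightarrow> P y) \<longrightarrow> P x"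
  show "P x"
  proof (induction x)
    case (Conj X) then show ?case using H[rule_format, of "Conj X"] by auto
  qed (use H in \<open>auto\<close>)
qed
function F :: "'p set \<Rightarrow> ('p \<Rightarrow> 'p \<Rightarrow> bool) \<Rightarrow> ('p \<Rightarrow> ('f, 'r) fml \<Rightarrow> real)
                 \<Rightarrow> ('f, 'r) fml \<Rightarrow> 'p \<Rightarrow> real" where
  "F P le f (Rel r ts) p = f p (Rel r ts)"
| "F P le f (Dist s t) p = f p (Dist s t)"
| "F P le f (Neg \<phi>) p = 1 - inf01 ((\<lambda>q. F P le f \<phi> q) ` {q \<in> P. le q p})"
| "F P le f (Half \<phi>) p = F P le f \<phi> p / 2"
| "F P le f (Plus \<phi> \<psi>) p = min (F P le f \<phi> p + F P le f \<psi> p) 1"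
| "F P le f (Conj \<Phi>) p = inf01 ((\<lambda>\<phi>. F P le f \<phi> p) ` rcset \<Phi>)"
| "F P le f (InfQ x \<phi>) p = inf01 ((\<lambda>c. F P le f (subst x (Cst c) \<phi>) p) ` UNIV)"
  by pat_completeness auto
termination
  by (relation "inv_image {(a, b). a \<in> immsub b} (\<lambda>(P, le, f, \<phi>, p). skel \<phi>)")
     (simp_all add: wf_immsub cset.set_map)

definition Fw :: "'p set \<Rightarrow> ('p \<Rightarrow> 'p \<Rightarrow> bool) \<Rightarrow> ('p \<Rightarrow> ('f, 'r) fml \<Rightarrow> real)
                  \<Rightarrow> ('f, 'r) fml \<Rightarrow> 'p \<Rightarrow> real" where
  "Fw P le f \<phi> p = sup01 ((\<lambda>q. inf01 ((\<lambda>q'. F P le f \<phi> q') ` {q' \<in> P. le q' q})) ` {q \<in> P. le q p})"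

end

theory Submission
  imports Defs
begin

lemma inf01_01: assumes "\<forall>x\<in>S. 0 \<le> x \<and> x \<le> (1::real)" shows "0 \<le> inf01 S \<and> inf01 S \<le> 1"
proof (cases "S = {}")
  case True then show ?thesis by (simp add: inf01_def)
next
  case False
  then obtain a where a: "a \<in> S" by blast
  have bdd: "bdd_below S" using assms by (auto intro: bdd_belowI)
  have "0 \<le> Inf S" using False assms by (auto intro: cInf_greatest)
  moreover have "Inf S \<le> a" using a bdd by (rule cInf_lower)
  moreover have "a \<le> 1" using a assms by auto
  ultimately show ?thesis using False by (simp add: inf01_def)
qed

lemma tvars_tsubst[simp]: "tvars (tsubst x (Cst c) t) = tvars t - {x}"
  by (induction t) auto

lemma fv_subst_Cst: "fv (subst x (Cst c) \<phi>) = fv \<phi> - {x}"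
proof (induction \<phi>)
  case (Rel r ts) then show ?case by auto
next
  case (Dist s t) then show ?case by auto
next
  case (Conj \<Phi>)
  have "fv (subst x (Cst c) (Conj \<Phi>)) = (\<Union>\<phi>\<in>rcset \<Phi>. fv (subst x (Cst c) \<phi>))"
    by (simp add: cset.set_map image_image)
  also have "\<dots> = (\<Union>\<phi>\<in>rcset \<Phi>. fv \<phi> - {x})" using Conj by simp
  also have "\<dots> = fv (Conj \<Phi>) - {x}" by (auto simp: cset.set_map)
  finally show ?case .
next
  case (InfQ y \<phi>) then show ?case by auto
qed auto

lemma freefor_Cst: "freefor (Cst c) x \<phi>"
  by (induction \<phi>) (auto simp: cset.set_map)

lemma LAC_immsub: "\<psi> \<in> LAC arf arr LA \<Longrightarrow> \<chi> \<in> immsub \<psi> \<Longrightarrow> \<chi> \<in> LAC arf arr LA"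
proof -
  assume a: "\<psi> \<in> LAC arf arr LA" and b: "\<chi> \<in> immsub \<psi>"
  show ?thesis unfolding LAC_def
  proof (rule InterI)
    fix S assume S: "S \<in> {S. fragment arf arr UNIV S \<and> countable S \<and> LA \<subseteq> S}"
    have "\<psi> \<in> S" using InterD[OF a[unfolded LAC_def] S] .
    moreover have "\<forall>\<phi>\<in>S. immsub \<phi> \<subseteq> S" using S unfolding fragment_def by simp
    ultimately show "\<chi> \<in> S" using b by blast
  qed
qed

lemma LAC_subst: "\<psi> \<in> LAC arf arr LA \<Longrightarrow> subst x (Cst c) \<psi> \<in> LAC arf arr LA"
proof -
  assume a: "\<psi> \<in> LAC arf arr LA"
  show ?thesis unfolding LAC_def
  proof (rule InterI)
    fix S assume S: "S \<in> {S. fragment arf arr UNIV S \<and> countable S \<and> LA \<subseteq> S}"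
    have "\<psi> \<in> S" using InterD[OF a[unfolded LAC_def] S] .
    moreover have "\<forall>\<phi>\<in>S. \<forall>x t. wf_trm arf UNIV t \<and> freefor t x \<phi> \<longrightarrow> subst x t \<phi> \<in> S"
      using S unfolding fragment_def by simp
    ultimately show "subst x (Cst c) \<psi> \<in> S" using freefor_Cst[of c x \<psi>] by simp
  qed
qed

lemma F_bounds:
  "\<lbrakk>\<forall>q\<in>P. \<forall>\<phi>\<in>atomic_sentences arf arr LA. 0 \<le> f q \<phi> \<and> f q \<phi> \<le> 1;
    \<psi> \<in> LAC arf arr LA; sentence \<psi>; q \<in> P\<rbrakk>
   \<Longrightarrow> 0 \<le> F P le f \<psi> q \<and> F P le f \<psi> q \<le> 1"
proof (induction P le f \<psi> q rule: F.induct)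
  case (1 P le f r ts p)
  then show ?case by (auto simp: atomic_sentences_def)
next
  case (2 P le f s t p)
  then show ?case by (auto simp: atomic_sentences_def)
next
  case (3 P le f \<phi> p)
  have "\<phi> \<in> LAC arf arr LA" using 3(3) by (rule LAC_immsub) simp
  moreover have "sentence \<phi>" using 3(4) by (simp add: sentence_def)
  ultimately have "\<forall>x\<in>(\<lambda>q. F P le f \<phi> q) ` {q \<in> P. le q p}. 0 \<le> x \<and> x \<le> 1"
    using 3 by auto
  from inf01_01[OF this] show ?case by simp
next
  case (4 P le f \<phi> p)
  have "\<phi> \<in> LAC arf arr LA" using 4(3) by (rule LAC_immsub) simp
  moreover have "sentence \<phi>" using 4(4) by (simp add: sentence_def)
  ultimately show ?case using 4 by auto
next
  case (5 P le f \<phi> \<psi> p)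
  have "\<phi> \<in> LAC arf arr LA" using 5(4) by (rule LAC_immsub) simp
  moreover have "\<psi> \<in> LAC arf arr LA" using 5(4) by (rule LAC_immsub) simp
  moreover have "sentence \<phi>" "sentence \<psi>" using 5(5) by (auto simp: sentence_def)
  ultimately show ?case using 5 by auto
next
  case (6 P le f \<Phi> p)
  have "\<forall>x\<in>(\<lambda>\<phi>. F P le f \<phi> p) ` rcset \<Phi>. 0 \<le> x \<and> x \<le> 1"
  proof
    fix x assume "x \<in> (\<lambda>\<phi>. F P le f \<phi> p) ` rcset \<Phi>"
    then obtain \<phi> where ph: "\<phi> \<in> rcset \<Phi>" and x: "x = F P le f \<phi> p" by blast
    have "\<phi> \<in> LAC arf arr LA" using 6(3) by (rule LAC_immsub) (simp add: ph)
    moreover have "sentence \<phi>" using 6(4) ph by (auto simp: sentence_def cset.set_map)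
    ultimately show "0 \<le> x \<and> x \<le> 1" using 6 ph x by auto
  qed
  from inf01_01[OF this] show ?case by simp
next
  case (7 P le f x \<phi> p)
  have "\<forall>y\<in>(\<lambda>c. F P le f (subst x (Cst c) \<phi>) p) ` UNIV. 0 \<le> y \<and> y \<le> 1"
  proof
    fix y assume "y \<in> (\<lambda>c. F P le f (subst x (Cst c) \<phi>) p) ` UNIV"
    then obtain c where y: "y = F P le f (subst x (Cst c) \<phi>) p" by blast
    have "\<phi> \<in> LAC arf arr LA" using 7(3) by (rule LAC_immsub) simp
    then have "subst x (Cst c) \<phi> \<in> LAC arf arr LA" by (rule LAC_subst)
    moreover have "sentence (subst x (Cst c) \<phi>)" using 7(4) by (auto simp: sentence_def fv_subst_Cst)
    ultimately show "0 \<le> y \<and> y \<le> 1" using 7 y by auto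
  qed
  from inf01_01[OF this] show ?case by simp
qed

lemma key:
  fixes h :: "'i \<Rightarrow> 'q \<Rightarrow> real"
  assumes Q: "Q \<noteq> {}" and h1: "\<forall>i\<in>I. \<forall>q\<in>Q. h i q \<le> 1"
  shows "1 - inf01 ((\<lambda>q. inf01 ((\<lambda>i. 1 - h i q) ` I)) ` Q)
         = sup01 ((\<lambda>i. sup01 ((\<lambda>q. h i q) ` Q)) ` I)"
proof (cases "I = {}")
  case True then show ?thesis using Q by (simp add: inf01_def sup01_def)
next
  case False
  define inner where "inner q = Inf ((\<lambda>i. 1 - h i q) ` I)" for q
  define S where "S i = Sup ((\<lambda>q. h i q) ` Q)" for i
  define L where "L = Inf (inner ` Q)"
  define R where "R = Sup (S ` I)"
  have lhs: "inf01 ((\<lambda>q. inf01 ((\<lambda>i. 1 - h i q) ` I)) ` Q) = L"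
    using False Q by (simp add: inf01_def inner_def L_def)
  have rhs: "sup01 ((\<lambda>i. sup01 ((\<lambda>q. h i q) ` Q)) ` I) = R"
    using False Q by (simp add: sup01_def S_def R_def)
  have bb1: "bdd_below ((\<lambda>i. 1 - h i q) ` I)" if "q \<in> Q" for q
    using h1 that by (intro bdd_belowI[of _ 0]) auto
  have inner0: "0 \<le> inner q" if "q \<in> Q" for q
    unfolding inner_def using h1 that False by (intro cInf_greatest) auto
  have bb2: "bdd_below (inner ` Q)" using inner0 by (intro bdd_belowI[of _ 0]) auto
  have ba1: "bdd_above ((\<lambda>q. h i q) ` Q)" if "i \<in> I" for i
    using h1 that by (intro bdd_aboveI[of _ 1]) auto
  have S1: "S i \<le> 1" if "i \<in> I" for i
    unfolding S_def using h1 that Q by (intro cSup_least) auto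
  have ba2: "bdd_above (S ` I)" using S1 by (intro bdd_aboveI[of _ 1]) auto
  have a: "R \<le> 1 - L"
    unfolding R_def
  proof (rule cSup_least)
    show "S ` I \<noteq> {}" using False by simp
    fix s assume "s \<in> S ` I"
    then obtain i where i: "i \<in> I" and s: "s = S i" by blast
    have "S i \<le> 1 - L" unfolding S_def
    proof (rule cSup_least)
      show "(\<lambda>q. h i q) ` Q \<noteq> {}" using Q by simp
      fix y assume "y \<in> (\<lambda>q. h i q) ` Q"
      then obtain q where q: "q \<in> Q" and y: "y = h i q" by blast
      have "L \<le> inner q" unfolding L_def using q bb2 by (intro cInf_lower) auto
      also have "inner q \<le> 1 - h i q" unfolding inner_def using i bb1[OF q] by (intro cInf_lower) auto
      finally show "y \<le> 1 - L" using y by simp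
    qed
    then show "s \<le> 1 - L" using s by simp
  qed
  have b: "1 - R \<le> L"
    unfolding L_def
  proof (rule cInf_greatest)
    show "inner ` Q \<noteq> {}" using Q by simp
    fix z assume "z \<in> inner ` Q"
    then obtain q where q: "q \<in> Q" and z: "z = inner q" by blast
    have "1 - R \<le> inner q" unfolding inner_def
    proof (rule cInf_greatest)
      show "(\<lambda>i. 1 - h i q) ` I \<noteq> {}" using False by simp
      fix y assume "y \<in> (\<lambda>i. 1 - h i q) ` I"
      then obtain i where i: "i \<in> I" and y: "y = 1 - h i q" by blast
      have "h i q \<le> S i" unfolding S_def using q ba1[OF i] by (intro cSup_upper) auto
      also have "S i \<le> R" unfolding R_def using i ba2 by (intro cSup_upper) auto
      finally show "1 - R \<le> y" using y by simp
    qed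
    then show "1 - R \<le> z" using z by simp
  qed
  show ?thesis using a b lhs rhs by simp
qed

theorem proposition4p1:
  fixes arf :: "'f \<Rightarrow> nat" and arr :: "'r \<Rightarrow> nat"
    and LA :: "('f, 'r) fml set"
    and \<delta> :: "('f, 'r) fml \<Rightarrow> nat \<Rightarrow> real \<Rightarrow> real"
    and P :: "'p set" and le :: "'p \<Rightarrow> 'p \<Rightarrow> bool" and f :: "'p \<Rightarrow> ('f, 'r) fml \<Rightarrow> real"
    and p :: 'p
  assumes sig_countable: "countable (UNIV :: 'f set)" "countable (UNIV :: 'r set)"
    and LA_fragment: "fragment arf arr {} LA" "countable LA"
    and delta_pos: "\<forall>\<phi> x \<epsilon>. \<epsilon> > 0 \<longrightarrow> \<delta> \<phi> x \<epsilon> > 0"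
    and forcing: "forcing_property arf arr LA \<delta> P le f"
    and p: "p \<in> P"
  shows "(\<forall>\<Phi>. Disj \<Phi> \<in> LAC arf arr LA \<and> sentence (Disj \<Phi>) \<longrightarrow>
            F P le f (Disj \<Phi>) p = sup01 ((\<lambda>\<phi>. Fw P le f \<phi> p) ` rcset \<Phi>))
       \<and> (\<forall>x \<phi>. SupQ x \<phi> \<in> LAC arf arr LA \<and> sentence (SupQ x \<phi>) \<longrightarrow>
            F P le f (SupQ x \<phi>) p = sup01 ((\<lambda>c. Fw P le f (subst x (Cst c) \<phi>) p) ` UNIV))"
proof -
  have refl: "\<forall>q\<in>P. le q q" and atom: "\<forall>q\<in>P. \<forall>\<phi>\<in>atomic_sentences arf arr LA. 0 \<le> f q \<phi> \<and> f q \<phi> \<le> 1"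
    using forcing unfolding forcing_property_def by auto
  define g where "g \<phi> q = inf01 ((\<lambda>q'. F P le f \<phi> q') ` {q' \<in> P. le q' q})" for \<phi> q
  have Fw_eq: "Fw P le f \<phi> p = sup01 ((\<lambda>q. g \<phi> q) ` {q \<in> P. le q p})" for \<phi>
    by (simp add: Fw_def g_def)
  have Q: "{q \<in> P. le q p} \<noteq> {}" using p refl by auto
  have g1: "g \<phi> q \<le> 1" if "\<phi> \<in> LAC arf arr LA" "sentence \<phi>" for \<phi> q
  proof -
    have "\<forall>x\<in>(\<lambda>q'. F P le f \<phi> q') ` {q' \<in> P. le q' q}. 0 \<le> x \<and> x \<le> 1"
      using F_bounds[OF atom that] by auto
    from inf01_01[OF this] show ?thesis by (simp add: g_def)
  qed
  have part1: "F P le f (Disj \<Phi>) p = sup01 ((\<lambda>\<phi>. Fw P le f \<phi> p) ` rcset \<Phi>)"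
    if H: "Disj \<Phi> \<in> LAC arf arr LA" "sentence (Disj \<Phi>)" for \<Phi>
  proof -
    have mem: "\<phi> \<in> LAC arf arr LA \<and> sentence \<phi>" if ph: "\<phi> \<in> rcset \<Phi>" for \<phi>
    proof
      have "Conj (cimage Neg \<Phi>) \<in> LAC arf arr LA" using H(1) unfolding Disj_def
        by (rule LAC_immsub) simp
      then have "Neg \<phi> \<in> LAC arf arr LA" by (rule LAC_immsub) (simp add: cset.set_map ph)
      then show "\<phi> \<in> LAC arf arr LA" by (rule LAC_immsub) simp
      show "sentence \<phi>" using H(2) ph by (auto simp: sentence_def Disj_def cset.set_map)
    qed
    have inner: "F P le f (Conj (cimage Neg \<Phi>)) q = inf01 ((\<lambda>\<phi>. 1 - g \<phi> q) ` rcset \<Phi>)" for q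
    proof -
      have "F P le f (Conj (cimage Neg \<Phi>)) q = inf01 ((\<lambda>\<phi>. F P le f \<phi> q) ` (Neg ` rcset \<Phi>))"
        by (simp only: F.simps cset.set_map)
      also have "(\<lambda>\<phi>. F P le f \<phi> q) ` (Neg ` rcset \<Phi>) = (\<lambda>\<phi>. 1 - g \<phi> q) ` rcset \<Phi>"
        unfolding image_image g_def by (simp only: F.simps)
      finally show ?thesis .
    qed
    have "F P le f (Disj \<Phi>) p = 1 - inf01 ((\<lambda>q. inf01 ((\<lambda>\<phi>. 1 - g \<phi> q) ` rcset \<Phi>)) ` {q \<in> P. le q p})"
      unfolding Disj_def F.simps(3) inner ..
    also have "\<dots> = sup01 ((\<lambda>\<phi>. sup01 ((\<lambda>q. g \<phi> q) ` {q \<in> P. le q p})) ` rcset \<Phi>)"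
      using mem g1 by (intro key[OF Q]) auto
    finally show ?thesis by (simp add: Fw_eq)
  qed
  have part2: "F P le f (SupQ x \<phi>) p = sup01 ((\<lambda>c. Fw P le f (subst x (Cst c) \<phi>) p) ` UNIV)"
    if H: "SupQ x \<phi> \<in> LAC arf arr LA" "sentence (SupQ x \<phi>)" for x \<phi>
  proof -
    have mem: "subst x (Cst c) \<phi> \<in> LAC arf arr LA \<and> sentence (subst x (Cst c) \<phi>)" for c
    proof
      have "InfQ x (Neg \<phi>) \<in> LAC arf arr LA" using H(1) unfolding SupQ_def
        by (rule LAC_immsub) simp
      then have "Neg \<phi> \<in> LAC arf arr LA" by (rule LAC_immsub) simp
      then have "\<phi> \<in> LAC arf arr LA" by (rule LAC_immsub) simp
      then show "subst x (Cst c) \<phi> \<in> LAC arf arr LA" by (rule LAC_subst)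
      show "sentence (subst x (Cst c) \<phi>)" using H(2)
        by (auto simp: sentence_def SupQ_def fv_subst_Cst)
    qed
    have "F P le f (SupQ x \<phi>) p = 1 - inf01 ((\<lambda>q. inf01 ((\<lambda>c. 1 - g (subst x (Cst c) \<phi>) q) ` UNIV)) ` {q \<in> P. le q p})"
      unfolding SupQ_def F.simps(3,7) subst.simps g_def ..
    also have "\<dots> = sup01 ((\<lambda>c. sup01 ((\<lambda>q. g (subst x (Cst c) \<phi>) q) ` {q \<in> P. le q p})) ` UNIV)"
      using mem g1 by (intro key[OF Q]) auto
    finally show ?thesis by (simp add: Fw_eq)
  qed
  show ?thesis using part1 part2 by blast
qed

end
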